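(* Let $X\subset\mathcal{S}^{m-1}$ be a finite set and let $S\subset\mathbb{R}^d$ be an $\epsilon$-isometric embedding of $X$. Then $(1-\epsilon)\,\omega(X)\le\omega(S)\le(1+\epsilon)\,\omega(X)$.
   Context: The gaussian width of $T\subseteq\mathbb{R}^D$ is $\omega(T)=\mathbb{E}_{\mathbf{g}}[\sup_{\mathbf{v}\in T}\langle\mathbf{g},\mathbf{v}\rangle]$ with $\mathbf{g}\sim N(0,1)^D$. $S$ is an $\epsilon$-isometric embedding of $X$ if $S=\psi(X)$ for a map $\psi:X\to\mathbb{R}^d$ with $(1-\epsilon)\|\mathbf{x}-\mathbf{y}\|_2\le\|\psi(\mathbf{x})-\psi(\mathbf{y})\|_2\le(1+\epsilon)\|\mathbf{x}-\mathbf{y}\|_2$ for all $\mathbf{x},\mathbf{y}\in X$. *)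

theory Defs
  imports "HOL-Probability.Probability"
begin

definition std_gaussian :: "'a::euclidean_space measure" where
  "std_gaussian = density lborel
     (\<lambda>x. ennreal ((2 * pi) powr (- real DIM('a) / 2) * exp (- (norm x)\<^sup>2 / 2)))"

definition gaussian_width :: "'a::euclidean_space set \<Rightarrow> real" where
  "gaussian_width T = (\<integral>g. (SUP v\<in>T. g \<bullet> v) \<partial>std_gaussian)"

definition eps_isometric :: "real \<Rightarrow> ('a::euclidean_space \<Rightarrow> 'b::euclidean_space) \<Rightarrow> 'a set \<Rightarrow> bool" where
  "eps_isometric \<epsilon> \<psi> X \<longleftrightarrow> (\<forall>x\<in>X. \<forall>y\<in>X.
      (1 - \<epsilon>) * dist x y \<le> dist (\<psi> x) (\<psi> y) \<and> dist (\<psi> x) (\<psi> y) \<le> (1 + \<epsilon>) * dist x y)"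

end

theory Submission
  imports Defs
begin


lemma deriv_under_integral:
  fixes f f' :: "real \<Rightarrow> 'a \<Rightarrow> real"
  assumes ab: "a < t0" "t0 < b"
    and int: "\<And>t. t \<in> {a<..<b} \<Longrightarrow> integrable M (f t)"
    and meas: "f' t0 \<in> borel_measurable M"
    and der: "\<And>x t. x \<in> space M \<Longrightarrow> t \<in> {a<..<b} \<Longrightarrow> ((\<lambda>s. f s x) has_real_derivative f' t x) (at t)"
    and w: "integrable M w"
    and bnd: "\<And>x t. x \<in> space M \<Longrightarrow> t \<in> {a<..<b} \<Longrightarrow> \<bar>f' t x\<bar> \<le> w x"
  shows "((\<lambda>t. \<integral>x. f t x \<partial>M) has_real_derivative (\<integral>x. f' t0 x \<partial>M)) (at t0)"
  unfolding has_field_derivative_iff tendsto_at_iff_sequentially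
proof (intro allI impI)
  fix X :: "nat \<Rightarrow> real"
  assume X: "\<forall>i. X i \<in> UNIV - {t0}" and lim: "X \<longlonglongrightarrow> t0"
  have t0: "t0 \<in> {a<..<b}" using ab by auto
  have ev: "eventually (\<lambda>n. X n \<in> {a<..<b}) sequentially"
    using lim by (rule topological_tendstoD) (use t0 in auto)
  define s where "s n x = (if X n \<in> {a<..<b} then (f (X n) x - f t0 x) / (X n - t0) else f' t0 x)" for n x
  have quot: "\<bar>(f t x - f t0 x) / (t - t0)\<bar> \<le> w x" if x: "x \<in> space M" and t: "t \<in> {a<..<b}" "t \<noteq> t0" for x t
  proof (cases "t < t0")
    case True
    obtain z where z: "t < z" "z < t0" "f t0 x - f t x = (t0 - t) * f' z x"
      using MVT2[of t t0 "\<lambda>s. f s x" "\<lambda>s. f' s x"] True der[OF x] t t0 by force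
    have "z \<in> {a<..<b}" using z t t0 by auto
    then have "\<bar>f' z x\<bar> \<le> w x" using bnd x by auto
    moreover have "(f t x - f t0 x) / (t - t0) = f' z x" using z True by (simp add: field_simps)
    ultimately show ?thesis by simp
  next
    case False
    then have tt: "t0 < t" using t by auto
    obtain z where z: "t0 < z" "z < t" "f t x - f t0 x = (t - t0) * f' z x"
      using MVT2[of t0 t "\<lambda>s. f s x" "\<lambda>s. f' s x"] tt der[OF x] t t0 by force
    have "z \<in> {a<..<b}" using z t t0 by auto
    then have "\<bar>f' z x\<bar> \<le> w x" using bnd x by auto
    moreover have "(f t x - f t0 x) / (t - t0) = f' z x" using z tt by (simp add: field_simps)
    ultimately show ?thesis by simp
  qed
  have sm: "s n \<in> borel_measurable M" for n
    using int[THEN borel_measurable_integrable] int[OF t0, THEN borel_measurable_integrable] meas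
    unfolding s_def by (cases "X n \<in> {a<..<b}") auto
  have sb: "AE x in M. norm (s n x) \<le> w x" for n
    using X quot bnd[OF _ t0] unfolding s_def by (auto simp: AE_iff_measurable)
  have sl: "AE x in M. (\<lambda>n. s n x) \<longlonglongrightarrow> f' t0 x"
  proof (rule AE_I2)
    fix x assume x: "x \<in> space M"
    have "((\<lambda>y. (f y x - f t0 x) / (y - t0)) \<longlongrightarrow> f' t0 x) (at t0)"
      using der[OF x t0] unfolding has_field_derivative_iff .
    then have "((\<lambda>y. (f y x - f t0 x) / (y - t0)) \<circ> X) \<longlonglongrightarrow> f' t0 x"
      using X lim unfolding tendsto_at_iff_sequentially by blast
    then show "(\<lambda>n. s n x) \<longlonglongrightarrow> f' t0 x"
      by (rule Lim_transform_eventually) (use ev in \<open>auto simp: s_def elim: eventually_mono\<close>)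
  qed
  have "(\<lambda>n. integral\<^sup>L M (s n)) \<longlonglongrightarrow> integral\<^sup>L M (f' t0)"
    by (rule integral_dominated_convergence[OF meas sm w sl sb])
  then show "((\<lambda>y. ((\<integral>x. f y x \<partial>M) - (\<integral>x. f t0 x \<partial>M)) / (y - t0)) \<circ> X) \<longlonglongrightarrow> (\<integral>x. f' t0 x \<partial>M)"
  proof (rule Lim_transform_eventually)
    show "\<forall>\<^sub>F n in sequentially. integral\<^sup>L M (s n) = ((\<lambda>y. ((\<integral>x. f y x \<partial>M) - (\<integral>x. f t0 x \<partial>M)) / (y - t0)) \<circ> X) n"
      using ev
    proof (rule eventually_mono)
      fix n assume n: "X n \<in> {a<..<b}"
      then show "integral\<^sup>L M (s n) = ((\<lambda>y. ((\<integral>x. f y x \<partial>M) - (\<integral>x. f t0 x \<partial>M)) / (y - t0)) \<circ> X) n"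
        unfolding s_def using int[OF n] int[OF t0] by simp
    qed
  qed
qed


definition gdens :: "'a::euclidean_space \<Rightarrow> real" where
  "gdens x = (2*pi) powr (- real DIM('a)/2) * exp (-(norm x)\<^sup>2/2)"

lemma gdens_nonneg: "0 \<le> gdens x" by (simp add: gdens_def)

lemma gdens_measurable[measurable]: "gdens \<in> borel_measurable borel"
  unfolding gdens_def by measurable

lemma std_gaussian_gdens: "std_gaussian = density lborel (\<lambda>x. ennreal (gdens x))"
  by (simp add: std_gaussian_def gdens_def)

lemma norm_sq_basis: "(norm (x::'a::euclidean_space))\<^sup>2 = (\<Sum>b\<in>Basis. (x \<bullet> b)\<^sup>2)"
  unfolding power2_norm_eq_inner euclidean_inner[of x x] by (simp add: power2_eq_square)

lemma gdens_prod: "gdens (x::'a::euclidean_space) = (\<Prod>b\<in>Basis. std_normal_density (x \<bullet> b))"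
proof -
  have "(\<Prod>b\<in>Basis. std_normal_density (x \<bullet> b)) = (\<Prod>b\<in>(Basis::'a set). 1 / sqrt (2*pi)) * (\<Prod>b\<in>Basis. exp (- (x \<bullet> b)\<^sup>2/2))"
    by (subst prod.distrib[symmetric]) (simp add: std_normal_density_def)
  also have "(\<Prod>b\<in>(Basis::'a set). exp (- (x \<bullet> b)\<^sup>2/2)) = exp (\<Sum>b\<in>Basis. - (x \<bullet> b)\<^sup>2/2)"
    by (simp add: exp_sum)
  also have "(\<Sum>b\<in>(Basis::'a set). - (x \<bullet> b)\<^sup>2/2) = -(norm x)\<^sup>2/2"
    by (simp add: norm_sq_basis sum_divide_distrib sum_negf)
  also have "(\<Prod>b\<in>(Basis::'a set). 1 / sqrt (2*pi)) = (2*pi) powr (- real DIM('a)/2)"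
  proof -
    have "(\<Prod>b\<in>(Basis::'a set). 1 / sqrt (2*pi)) = ((2*pi) powr (-1/2)) ^ DIM('a)"
      by (simp add: powr_minus_divide powr_half_sqrt)
    also have "((2*pi) powr (-1/2)) ^ DIM('a) = (2*pi) powr (- real DIM('a)/2)"
      by (simp add: powr_realpow[symmetric] powr_powr)
    finally show ?thesis .
  qed
  finally show ?thesis by (simp add: gdens_def)
qed

lemma nn_integral_std_normal: "(\<integral>\<^sup>+x. ennreal (std_normal_density x) \<partial>lborel) = 1"
  by (subst nn_integral_eq_integral) auto
  
lemma prob_space_std_gaussian: "prob_space (std_gaussian :: 'a::euclidean_space measure)"
proof
  have "emeasure (std_gaussian::'a measure) (space std_gaussian) = (\<integral>\<^sup>+x. ennreal (gdens x) \<partial>(lborel::'a measure))"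
    by (simp add: std_gaussian_gdens emeasure_density)
  also have "\<dots> = (\<integral>\<^sup>+x. (\<Prod>b\<in>(Basis::'a set). ennreal (std_normal_density (x \<bullet> b))) \<partial>lborel)"
    by (simp add: gdens_prod prod_ennreal)
  also have "\<dots> = (\<Prod>b\<in>(Basis::'a set). (\<integral>\<^sup>+x. ennreal (std_normal_density x) \<partial>lborel))"
    by (rule nn_integral_lborel_prod) auto
  also have "\<dots> = 1" by (simp add: nn_integral_std_normal)
  finally show "emeasure (std_gaussian::'a measure) (space std_gaussian) = 1" .
qed


lemma exp_abs_normal_bound:
  "exp (K * \<bar>t\<bar>) * std_normal_density t \<le> exp (K\<^sup>2/2) * (normal_density K 1 t + normal_density (-K) 1 t)"
proof -
  have e1: "exp (K * t) * std_normal_density t = exp (K\<^sup>2/2) * normal_density K 1 t"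
    by (simp add: normal_density_def std_normal_density_def mult_exp_exp[symmetric] power2_eq_square algebra_simps
        del: mult_exp_exp) (simp add: mult_exp_exp field_simps power2_eq_square)
  have e2: "exp (- K * t) * std_normal_density t = exp (K\<^sup>2/2) * normal_density (-K) 1 t"
    by (simp add: normal_density_def std_normal_density_def mult_exp_exp[symmetric] power2_eq_square algebra_simps
        del: mult_exp_exp) (simp add: mult_exp_exp field_simps power2_eq_square)
  have "exp (K * \<bar>t\<bar>) \<le> exp (K * t) + exp (- K * t)"
    by (cases "t \<ge> 0") (auto simp: add_increasing add_increasing2)
  then have "exp (K * \<bar>t\<bar>) * std_normal_density t \<le> (exp (K * t) + exp (- K * t)) * std_normal_density t"
    by (rule mult_right_mono) simp
  also have "\<dots> = exp (K\<^sup>2/2) * (normal_density K 1 t + normal_density (-K) 1 t)"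
    using e1 e2 by (simp add: algebra_simps)
  finally show ?thesis .
qed

lemma nn_integral_exp_abs_normal:
  "(\<integral>\<^sup>+t. ennreal (exp (K * \<bar>t\<bar>) * std_normal_density t) \<partial>lborel) < \<infinity>"
proof -
  have "(\<integral>\<^sup>+t. ennreal (exp (K * \<bar>t\<bar>) * std_normal_density t) \<partial>lborel)
     \<le> (\<integral>\<^sup>+t. ennreal (exp (K\<^sup>2/2) * (normal_density K 1 t + normal_density (-K) 1 t)) \<partial>lborel)"
    by (intro nn_integral_mono ennreal_leI exp_abs_normal_bound)
  also have "\<dots> = ennreal (\<integral>t. exp (K\<^sup>2/2) * (normal_density K 1 t + normal_density (-K) 1 t) \<partial>lborel)"
    by (intro nn_integral_eq_integral) auto
  finally show ?thesis by (auto simp: top_unique less_top[symmetric])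
qed

lemma nn_integral_exp_l1:
  "(\<integral>\<^sup>+x. ennreal (exp (K * (\<Sum>b\<in>Basis. \<bar>x \<bullet> b\<bar>))) \<partial>(std_gaussian::'a::euclidean_space measure)) < \<infinity>"
proof -
  have "(\<integral>\<^sup>+x. ennreal (exp (K * (\<Sum>b\<in>Basis. \<bar>x \<bullet> b\<bar>))) \<partial>(std_gaussian::'a measure))
      = (\<integral>\<^sup>+x. ennreal (gdens x) * ennreal (exp (K * (\<Sum>b\<in>Basis. \<bar>x \<bullet> b\<bar>))) \<partial>(lborel::'a measure))"
    unfolding std_gaussian_gdens by (subst nn_integral_density) auto
  also have "\<dots> = (\<integral>\<^sup>+x. (\<Prod>b\<in>(Basis::'a set). ennreal (exp (K * \<bar>x \<bullet> b\<bar>) * std_normal_density (x \<bullet> b))) \<partial>lborel)"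
    by (intro nn_integral_cong)
       (simp add: ennreal_mult[symmetric] gdens_nonneg prod_ennreal prod_nonneg gdens_prod sum_distrib_left exp_sum prod.distrib mult.commute)
  also have "\<dots> = (\<Prod>b\<in>(Basis::'a set). (\<integral>\<^sup>+t. ennreal (exp (K * \<bar>t\<bar>) * std_normal_density t) \<partial>lborel))"
    by (rule nn_integral_lborel_prod) auto
  also have "\<dots> < \<infinity>"
    using nn_integral_exp_abs_normal[of K] by (simp add: power_less_top_ennreal)
  finally show ?thesis .
qed

lemma integrable_exp_norm:
  assumes "0 \<le> K"
  shows "integrable (std_gaussian::'a::euclidean_space measure) (\<lambda>x. exp (K * norm x))"
proof -
  have i: "integrable (std_gaussian::'a measure) (\<lambda>x. exp (K * (\<Sum>b\<in>Basis. \<bar>x \<bullet> b\<bar>)))"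
    by (rule integrableI_bounded) (use nn_integral_exp_l1 in \<open>auto simp: std_gaussian_gdens\<close>)
  show ?thesis
    by (rule Bochner_Integration.integrable_bound[OF i]) (auto simp: std_gaussian_gdens intro!: AE_I2 mult_left_mono norm_le_l1 assms)
qed



lemma integral_std_gaussian:
  assumes [measurable]: "f \<in> borel_measurable borel"
  shows "(\<integral>x. f x \<partial>std_gaussian) = (\<integral>x. gdens x * f x \<partial>lborel)"
  unfolding std_gaussian_gdens by (subst integral_density) (auto simp: gdens_nonneg)

lemma gdens_shift:
  "gdens (x - t *\<^sub>R v) = gdens (x::'a::euclidean_space) * exp (t * (x \<bullet> v) - t\<^sup>2 * (norm v)\<^sup>2 / 2)"
proof -
  have "(norm (x - t *\<^sub>R v))\<^sup>2 = (norm x)\<^sup>2 - 2 * t * (x \<bullet> v) + t\<^sup>2 * (norm v)\<^sup>2"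
    unfolding power2_norm_eq_inner by (simp add: inner_diff_left inner_diff_right inner_commute power2_eq_square algebra_simps)
  then show ?thesis
    by (simp add: gdens_def mult_exp_exp[symmetric] field_simps del: mult_exp_exp)
      (simp add: mult_exp_exp field_simps)
qed

lemma cameron_martin:
  fixes H :: "'a::euclidean_space \<Rightarrow> real"
  assumes [measurable]: "H \<in> borel_measurable borel"
  shows "(\<integral>x. H (x + t *\<^sub>R v) \<partial>std_gaussian) = (\<integral>x. H x * exp (t * (x \<bullet> v) - t\<^sup>2 * (norm v)\<^sup>2 / 2) \<partial>std_gaussian)"
proof -
  have "(\<integral>x. H (x + t *\<^sub>R v) \<partial>std_gaussian) = (\<integral>x. gdens x * H (t *\<^sub>R v + x) \<partial>lborel)"
    by (subst integral_std_gaussian) (auto simp: add.commute)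
  also have "\<dots> = (\<integral>y. gdens (y - t *\<^sub>R v) * H y \<partial>distr lborel borel ((+) (t *\<^sub>R v)))"
    by (subst integral_distr) auto
  also have "\<dots> = (\<integral>y. gdens (y - t *\<^sub>R v) * H y \<partial>lborel)"
    by (simp add: lborel_distr_plus)
  also have "\<dots> = (\<integral>y. gdens y * (H y * exp (t * (y \<bullet> v) - t\<^sup>2 * (norm v)\<^sup>2 / 2)) \<partial>lborel)"
    by (simp add: gdens_shift algebra_simps)
  also have "\<dots> = (\<integral>x. H x * exp (t * (x \<bullet> v) - t\<^sup>2 * (norm v)\<^sup>2 / 2) \<partial>std_gaussian)"
    by (subst integral_std_gaussian) auto
  finally show ?thesis .
qed



lemma sets_std_gaussian[simp, measurable_cong]: "sets std_gaussian = sets borel"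
  by (simp add: std_gaussian_def)

lemma space_std_gaussian[simp]: "space std_gaussian = UNIV"
  by (simp add: std_gaussian_def)

lemma exp_arg_bound:
  assumes "\<bar>t\<bar> < 1"
  shows "t * (x \<bullet> v) - t\<^sup>2 * (norm v)\<^sup>2 / 2 \<le> norm v * norm (x::'a::euclidean_space)"
proof -
  have "t * (x \<bullet> v) \<le> \<bar>t\<bar> * \<bar>x \<bullet> v\<bar>" by (simp add: abs_mult[symmetric])
  also have "\<dots> \<le> 1 * (norm x * norm v)"
    using assms by (intro mult_mono) (auto simp: Cauchy_Schwarz_ineq2)
  finally have "t * (x \<bullet> v) \<le> norm v * norm x" by (simp add: mult.commute)
  moreover have "0 \<le> t\<^sup>2 * (norm v)\<^sup>2 / 2" by simp
  ultimately show ?thesis by linarith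
qed

lemma gauss_ibp:
  fixes H H' :: "'a::euclidean_space \<Rightarrow> real" and v :: 'a
  assumes [measurable]: "H \<in> borel_measurable borel" "H' \<in> borel_measurable borel"
    and hb: "\<And>x. \<bar>H x\<bar> \<le> B" and h'b: "\<And>x. \<bar>H' x\<bar> \<le> B"
    and der: "\<And>x t. ((\<lambda>s. H (x + s *\<^sub>R v)) has_real_derivative H' (x + t *\<^sub>R v)) (at t)"
  shows "(\<integral>x. H' x \<partial>std_gaussian) = (\<integral>x. (x \<bullet> v) * H x \<partial>std_gaussian)"
proof -
  interpret prob_space "std_gaussian :: 'a measure" by (rule prob_space_std_gaussian)
  have B: "0 \<le> B" using hb[of 0] by linarith
  have [measurable]: "(\<lambda>x. H (x + t *\<^sub>R v)) \<in> borel_measurable borel" for t by measurable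
  have [measurable]: "(\<lambda>x. H' (x + t *\<^sub>R v)) \<in> borel_measurable borel" for t by measurable
  have d1: "((\<lambda>t. \<integral>x. H (x + t *\<^sub>R v) \<partial>std_gaussian) has_real_derivative
             (\<integral>x. H' (x + 0 *\<^sub>R v) \<partial>std_gaussian)) (at 0)"
  proof (rule deriv_under_integral[where a="-1" and b=1 and w="\<lambda>_. B"])
    show "integrable std_gaussian (\<lambda>x. H (x + t *\<^sub>R v))" for t
      by (rule integrable_const_bound[where B=B]) (auto simp: hb)
  qed (auto simp: h'b der)
  define E where "E t x = exp (t * (x \<bullet> v) - t\<^sup>2 * (norm v)\<^sup>2 / 2)" for t and x :: 'a
  have [measurable]: "(\<lambda>x. H x * E t x) \<in> borel_measurable borel" for t
    unfolding E_def by measurable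
  have [measurable]: "(\<lambda>x. H x * ((x \<bullet> v) - t * (norm v)\<^sup>2) * E t x) \<in> borel_measurable borel" for t
    unfolding E_def by measurable
  have Eb: "E t x \<le> exp (norm v * norm x)" if "t \<in> {-1<..<1}" for t x
    unfolding E_def using exp_arg_bound[of t x v] that by auto
  define w where "w x = B * (norm v + (norm v)\<^sup>2) * exp ((norm v + 1) * norm x)" for x :: 'a
  have wi: "integrable std_gaussian w"
    unfolding w_def by (intro integrable_mult_right integrable_exp_norm) simp
  have d2: "((\<lambda>t. \<integral>x. H x * E t x \<partial>std_gaussian) has_real_derivative
             (\<integral>x. H x * ((x \<bullet> v) - 0 * (norm v)\<^sup>2) * E 0 x \<partial>std_gaussian)) (at 0)"
  proof (rule deriv_under_integral[where a="-1" and b=1 and w=w, OF _ _ _ _ _ wi])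
    show "integrable std_gaussian (\<lambda>x. H x * E t x)" if "t \<in> {-1<..<1}" for t
    proof (rule Bochner_Integration.integrable_bound[OF integrable_mult_right[OF integrable_exp_norm[of "norm v"]]])
      show "AE x in std_gaussian. norm (H x * E t x) \<le> norm (B * exp (norm v * norm x))"
      proof (rule AE_I2)
        fix x
        have "\<bar>H x\<bar> * E t x \<le> B * exp (norm v * norm x)"
          by (intro mult_mono hb Eb that) (auto simp: E_def B)
        then show "norm (H x * E t x) \<le> norm (B * exp (norm v * norm x))"
          using B by (simp add: abs_mult E_def)
      qed
    qed auto
    show "((\<lambda>s. H x * E s x) has_real_derivative H x * ((x \<bullet> v) - t * (norm v)\<^sup>2) * E t x) (at t)" for x t
      unfolding E_def by (auto intro!: derivative_eq_intros simp: algebra_simps power2_eq_square)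
    show "\<bar>H x * ((x \<bullet> v) - t * (norm v)\<^sup>2) * E t x\<bar> \<le> w x" if "t \<in> {-1<..<1}" for x t
    proof -
      have "\<bar>(x \<bullet> v) - t * (norm v)\<^sup>2\<bar> \<le> norm x * norm v + (norm v)\<^sup>2"
      proof -
        have "\<bar>t * (norm v)\<^sup>2\<bar> \<le> (norm v)\<^sup>2" using that by (auto simp: abs_mult intro!: mult_left_le_one_le)
        then show ?thesis using Cauchy_Schwarz_ineq2[of x v] by linarith
      qed
      also have "\<dots> \<le> (norm v + (norm v)\<^sup>2) * (1 + norm x)"
        by (simp add: algebra_simps power2_eq_square)
      also have "\<dots> \<le> (norm v + (norm v)\<^sup>2) * exp (norm x)"
        by (intro mult_left_mono) (auto simp: add_nonneg_nonneg exp_ge_add_one_self)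
      finally have a: "\<bar>(x \<bullet> v) - t * (norm v)\<^sup>2\<bar> \<le> (norm v + (norm v)\<^sup>2) * exp (norm x)" .
      have "\<bar>H x * ((x \<bullet> v) - t * (norm v)\<^sup>2) * E t x\<bar> = \<bar>H x\<bar> * \<bar>(x \<bullet> v) - t * (norm v)\<^sup>2\<bar> * E t x"
        by (simp add: abs_mult E_def)
      also have "\<dots> \<le> B * ((norm v + (norm v)\<^sup>2) * exp (norm x)) * exp (norm v * norm x)"
        by (intro mult_mono hb a Eb that) (auto simp: B E_def)
      also have "\<dots> = w x"
        by (simp add: w_def mult_exp_exp[symmetric] algebra_simps del: mult_exp_exp)
      finally show ?thesis .
    qed
  qed (auto simp: E_def)
  have eq: "(\<lambda>t. \<integral>x. H (x + t *\<^sub>R v) \<partial>std_gaussian) = (\<lambda>t. \<integral>x. H x * E t x \<partial>std_gaussian)"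
    unfolding E_def by (intro ext cameron_martin) simp
  have "(\<integral>x. H' (x + 0 *\<^sub>R v) \<partial>std_gaussian) = (\<integral>x. H x * ((x \<bullet> v) - 0 * (norm v)\<^sup>2) * E 0 x \<partial>std_gaussian)"
    using DERIV_unique[OF d1 d2[folded eq]] .
  then show ?thesis by (simp add: E_def mult.commute)
qed



lemma softmax_quad:
  fixes \<pi> :: "'i \<Rightarrow> real" and D :: "'i \<Rightarrow> 'i \<Rightarrow> real"
  assumes "finite I" "\<And>i. i \<in> I \<Longrightarrow> 0 \<le> \<pi> i" "sum \<pi> I = 1"
    and "\<And>i j. i \<in> I \<Longrightarrow> j \<in> I \<Longrightarrow> 0 \<le> D i i + D j j - 2 * D i j"
  shows "(\<Sum>i\<in>I. \<pi> i * D i i) - (\<Sum>i\<in>I. \<Sum>j\<in>I. \<pi> i * \<pi> j * D i j) \<ge> 0"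
proof -
  have "0 \<le> (\<Sum>i\<in>I. \<Sum>j\<in>I. \<pi> i * \<pi> j * (D i i + D j j - 2 * D i j))"
    using assms by (intro sum_nonneg mult_nonneg_nonneg) auto
  also have "\<dots> = (\<Sum>i\<in>I. \<Sum>j\<in>I. \<pi> i * \<pi> j * D i i) + (\<Sum>i\<in>I. \<Sum>j\<in>I. \<pi> i * \<pi> j * D j j)
      - 2 * (\<Sum>i\<in>I. \<Sum>j\<in>I. \<pi> i * \<pi> j * D i j)"
    by (simp add: algebra_simps sum.distrib sum_subtractf sum_distrib_left)
  also have "(\<Sum>i\<in>I. \<Sum>j\<in>I. \<pi> i * \<pi> j * D i i) = (\<Sum>i\<in>I. \<pi> i * D i i)"
    using assms(3) by (simp add: mult.commute mult.left_commute sum_distrib_left[symmetric] sum_distrib_right[symmetric])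
  also have "(\<Sum>i\<in>I. \<Sum>j\<in>I. \<pi> i * \<pi> j * D j j) = (\<Sum>i\<in>I. \<pi> i * D i i)"
    using assms(3) by (subst sum.swap) (simp add: mult.commute mult.left_commute sum_distrib_left[symmetric] sum_distrib_right[symmetric])
  finally show ?thesis by linarith
qed

locale sf =
  fixes I :: "'i set" and p q :: "'i \<Rightarrow> 'a::euclidean_space" and \<beta> :: real
  assumes fin: "finite I" and ne: "I \<noteq> {}" and \<beta>: "0 < \<beta>"
begin

definition "u \<theta> i = sin \<theta> *\<^sub>R q i + cos \<theta> *\<^sub>R p i"
definition "u' \<theta> i = cos \<theta> *\<^sub>R q i - sin \<theta> *\<^sub>R p i"
definition "Z \<theta> x = (\<Sum>j\<in>I. exp (\<beta> * (x \<bullet> u \<theta> j)))"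
definition "\<Phi> \<theta> x = ln (Z \<theta> x) / \<beta>"
definition "\<pi> \<theta> x i = exp (\<beta> * (x \<bullet> u \<theta> i)) / Z \<theta> x"

lemma Z_pos: "0 < Z \<theta> x"
  unfolding Z_def using fin ne by (intro sum_pos) auto

lemma \<pi>_nonneg: "0 \<le> \<pi> \<theta> x i"
  unfolding \<pi>_def by (intro divide_nonneg_pos) (auto simp: Z_pos)

lemma sum_\<pi>: "(\<Sum>i\<in>I. \<pi> \<theta> x i) = 1"
  using Z_pos[of \<theta> x] by (simp add: \<pi>_def sum_divide_distrib[symmetric] Z_def[symmetric])

lemma \<pi>_le1: "i \<in> I \<Longrightarrow> \<pi> \<theta> x i \<le> 1"
  using sum_\<pi>[of \<theta> x] member_le_sum[of i I "\<pi> \<theta> x"] fin \<pi>_nonneg by auto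

lemma inner_u: "x \<bullet> u \<theta> i = sin \<theta> * (x \<bullet> q i) + cos \<theta> * (x \<bullet> p i)"
  by (simp add: u_def inner_add_right)

lemma inner_u': "x \<bullet> u' \<theta> i = cos \<theta> * (x \<bullet> q i) - sin \<theta> * (x \<bullet> p i)"
  by (simp add: u'_def inner_diff_right)

lemma deriv_inner_u: "((\<lambda>\<theta>. x \<bullet> u \<theta> i) has_real_derivative x \<bullet> u' \<theta> i) (at \<theta>)"
  unfolding inner_u inner_u' by (auto intro!: derivative_eq_intros)

lemma deriv_Z: "((\<lambda>\<theta>. Z \<theta> x) has_real_derivative (\<Sum>j\<in>I. exp (\<beta> * (x \<bullet> u \<theta> j)) * (\<beta> * (x \<bullet> u' \<theta> j)))) (at \<theta>)"
  unfolding Z_def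
  by (intro DERIV_sum DERIV_chain2[OF DERIV_exp] DERIV_cmult deriv_inner_u)

lemma deriv_\<Phi>: "((\<lambda>\<theta>. \<Phi> \<theta> x) has_real_derivative (\<Sum>i\<in>I. \<pi> \<theta> x i * (x \<bullet> u' \<theta> i))) (at \<theta>)"
proof -
  have "((\<lambda>\<theta>. ln (Z \<theta> x) / \<beta>) has_real_derivative
      (1 / Z \<theta> x * (\<Sum>j\<in>I. exp (\<beta> * (x \<bullet> u \<theta> j)) * (\<beta> * (x \<bullet> u' \<theta> j)))) / \<beta>) (at \<theta>)"
    by (intro DERIV_cdivide DERIV_chain2[OF DERIV_ln_divide deriv_Z] Z_pos)
  also have "(1 / Z \<theta> x * (\<Sum>j\<in>I. exp (\<beta> * (x \<bullet> u \<theta> j)) * (\<beta> * (x \<bullet> u' \<theta> j)))) / \<beta>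
      = (\<Sum>i\<in>I. \<pi> \<theta> x i * (x \<bullet> u' \<theta> i))"
    using \<beta> by (simp add: \<pi>_def sum_divide_distrib sum_distrib_left)
  finally show ?thesis unfolding \<Phi>_def .
qed

end


lemma integrable_const_std_gaussian[simp]: "integrable (std_gaussian::'a::euclidean_space measure) (\<lambda>x. c)"
proof -
  interpret prob_space "std_gaussian :: 'a measure" by (rule prob_space_std_gaussian)
  show ?thesis by simp
qed

lemma norm_le_exp_norm: "norm x \<le> exp (norm x)"
  using exp_ge_add_one_self[of "norm x"] by linarith

context sf
begin

definition "C = (\<Sum>i\<in>I. norm (p i) + norm (q i))"

lemma C_nonneg: "0 \<le> C" unfolding C_def by (intro sum_nonneg) auto

lemma norm_pq_le_C: "i \<in> I \<Longrightarrow> norm (p i) + norm (q i) \<le> C"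
  unfolding C_def using fin by (intro member_le_sum) auto

lemma abs_inner_u: "i \<in> I \<Longrightarrow> \<bar>x \<bullet> u \<theta> i\<bar> \<le> C * norm x"
proof -
  assume i: "i \<in> I"
  have "\<bar>x \<bullet> u \<theta> i\<bar> \<le> \<bar>sin \<theta>\<bar> * \<bar>x \<bullet> q i\<bar> + \<bar>cos \<theta>\<bar> * \<bar>x \<bullet> p i\<bar>"
    unfolding inner_u by (metis abs_mult abs_triangle_ineq)
  also have "\<dots> \<le> 1 * (norm x * norm (q i)) + 1 * (norm x * norm (p i))"
    by (intro add_mono mult_mono) (auto simp: Cauchy_Schwarz_ineq2)
  also have "\<dots> = (norm (p i) + norm (q i)) * norm x" by (simp add: algebra_simps)
  also have "\<dots> \<le> C * norm x" by (intro mult_right_mono norm_pq_le_C i) simp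
  finally show ?thesis .
qed

lemma abs_inner_u': "i \<in> I \<Longrightarrow> \<bar>x \<bullet> u' \<theta> i\<bar> \<le> C * norm x"
proof -
  assume i: "i \<in> I"
  have "\<bar>x \<bullet> u' \<theta> i\<bar> \<le> \<bar>cos \<theta>\<bar> * \<bar>x \<bullet> q i\<bar> + \<bar>sin \<theta>\<bar> * \<bar>x \<bullet> p i\<bar>"
    unfolding inner_u' by (metis abs_mult abs_triangle_ineq4)
  also have "\<dots> \<le> 1 * (norm x * norm (q i)) + 1 * (norm x * norm (p i))"
    by (intro add_mono mult_mono) (auto simp: Cauchy_Schwarz_ineq2)
  also have "\<dots> = (norm (p i) + norm (q i)) * norm x" by (simp add: algebra_simps)
  also have "\<dots> \<le> C * norm x" by (intro mult_right_mono norm_pq_le_C i) simp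
  finally show ?thesis .
qed

lemma lnI_nonneg: "0 \<le> ln (card I) / \<beta>"
proof -
  have "1 \<le> card I" using fin ne by (simp add: Suc_le_eq card_gt_0_iff)
  then show ?thesis using \<beta> by (intro divide_nonneg_pos ln_ge_zero) auto
qed

lemma Z_ge: "i \<in> I \<Longrightarrow> exp (\<beta> * (x \<bullet> u \<theta> i)) \<le> Z \<theta> x"
  unfolding Z_def using fin by (intro member_le_sum) auto

lemma Z_le: assumes "\<And>j. j \<in> I \<Longrightarrow> x \<bullet> u \<theta> j \<le> M"
  shows "Z \<theta> x \<le> card I * exp (\<beta> * M)"
  unfolding Z_def using assms \<beta> by (intro sum_bounded_above) auto

lemma \<Phi>_ge: "i \<in> I \<Longrightarrow> x \<bullet> u \<theta> i \<le> \<Phi> \<theta> x"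
proof -
  assume i: "i \<in> I"
  have "ln (exp (\<beta> * (x \<bullet> u \<theta> i))) \<le> ln (Z \<theta> x)"
    using Z_ge[OF i] by (subst ln_le_cancel_iff) (auto simp: Z_pos)
  then show ?thesis using \<beta> by (simp add: \<Phi>_def field_simps)
qed

lemma \<Phi>_le: assumes "\<And>j. j \<in> I \<Longrightarrow> x \<bullet> u \<theta> j \<le> M"
  shows "\<Phi> \<theta> x \<le> M + ln (card I) / \<beta>"
proof -
  have cI: "0 < card I" using fin ne by (simp add: card_gt_0_iff)
  have "ln (Z \<theta> x) \<le> ln (card I * exp (\<beta> * M))"
    using Z_le[OF assms] by (subst ln_le_cancel_iff) (auto simp: Z_pos cI)
  also have "\<dots> = ln (card I) + \<beta> * M" using cI by (simp add: ln_mult)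
  finally show ?thesis using \<beta> by (simp add: \<Phi>_def field_simps)
qed

lemma abs_\<Phi>: "\<bar>\<Phi> \<theta> x\<bar> \<le> C * norm x + ln (card I) / \<beta>"
proof -
  obtain i where i: "i \<in> I" using ne by auto
  have "\<Phi> \<theta> x \<le> C * norm x + ln (card I) / \<beta>"
    by (rule \<Phi>_le) (meson abs_inner_u abs_le_D1)
  moreover have "- (C * norm x) \<le> \<Phi> \<theta> x"
    using \<Phi>_ge[OF i, of x \<theta>] abs_inner_u[OF i, of x \<theta>] by linarith
  moreover have "0 \<le> ln (card I) / \<beta>" by (rule lnI_nonneg)
  ultimately show ?thesis by linarith
qed

lemma \<Phi>_measurable[measurable]: "\<Phi> \<theta> \<in> borel_measurable borel"
  unfolding \<Phi>_def Z_def by measurable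

lemma \<pi>_measurable[measurable]: "(\<lambda>x. \<pi> \<theta> x i) \<in> borel_measurable borel"
  unfolding \<pi>_def Z_def by measurable

lemma integrable_\<Phi>: "integrable std_gaussian (\<Phi> \<theta>)"
proof (rule Bochner_Integration.integrable_bound)
  show "integrable std_gaussian (\<lambda>x. C * exp (norm x) + ln (card I) / \<beta>)"
    by (intro Bochner_Integration.integrable_add integrable_mult_right integrable_exp_norm[of 1, simplified]) auto
  show "AE x in std_gaussian. norm (\<Phi> \<theta> x) \<le> norm (C * exp (norm x) + ln (card I) / \<beta>)"
  proof (rule AE_I2)
    fix x :: 'a
    have "C * norm x \<le> C * exp (norm x)"
      by (intro mult_left_mono C_nonneg norm_le_exp_norm)
    moreover have "0 \<le> ln (card I) / \<beta>" by (rule lnI_nonneg)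
    ultimately show "norm (\<Phi> \<theta> x) \<le> norm (C * exp (norm x) + ln (card I) / \<beta>)"
      using abs_\<Phi>[of \<theta> x] C_nonneg by simp
  qed
qed simp

lemma abs_dterm: "i \<in> I \<Longrightarrow> \<bar>\<pi> \<theta> x i * (x \<bullet> u' \<theta> i)\<bar> \<le> C * exp (norm x)"
proof -
  assume i: "i \<in> I"
  have "\<bar>\<pi> \<theta> x i * (x \<bullet> u' \<theta> i)\<bar> \<le> 1 * (C * norm x)"
    unfolding abs_mult using \<pi>_le1[OF i] \<pi>_nonneg abs_inner_u'[OF i]
    by (intro mult_mono) auto
  also have "\<dots> \<le> C * exp (norm x)"
    by (simp add: C_nonneg mult_left_mono norm_le_exp_norm)
  finally show ?thesis .
qed

lemma integrable_dterm: "integrable std_gaussian (\<lambda>x. \<pi> \<theta> x i * (x \<bullet> u' \<theta> i))" if "i \<in> I"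
proof (rule Bochner_Integration.integrable_bound)
  show "integrable std_gaussian (\<lambda>x. C * exp (norm x))"
    by (intro integrable_mult_right integrable_exp_norm[of 1, simplified]) 
  show "AE x in std_gaussian. norm (\<pi> \<theta> x i * (x \<bullet> u' \<theta> i)) \<le> norm (C * exp (norm x))"
    using abs_dterm[OF that] C_nonneg by (intro AE_I2) simp
qed simp

lemma deriv_\<phi>:
  "((\<lambda>\<theta>. \<integral>x. \<Phi> \<theta> x \<partial>std_gaussian) has_real_derivative
     (\<integral>x. (\<Sum>i\<in>I. \<pi> \<theta> x i * (x \<bullet> u' \<theta> i)) \<partial>std_gaussian)) (at \<theta>)"
proof (rule deriv_under_integral[where a="\<theta>-1" and b="\<theta>+1" and w="\<lambda>x. card I * (C * exp (norm x))"])
  show "integrable std_gaussian (\<lambda>x. card I * (C * exp (norm x)))"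
    by (intro integrable_mult_right integrable_exp_norm[of 1, simplified])
  show "\<bar>\<Sum>i\<in>I. \<pi> t x i * (x \<bullet> u' t i)\<bar> \<le> card I * (C * exp (norm x))" for t x
    by (rule order_trans[OF sum_abs sum_bounded_above]) (use abs_dterm in auto)
qed (auto simp: integrable_\<Phi> deriv_\<Phi>)

end


lemma integrable_bounded_std_gaussian:
  fixes f :: "'a::euclidean_space \<Rightarrow> real"
  assumes "f \<in> borel_measurable borel" "\<And>x. \<bar>f x\<bar> \<le> B"
  shows "integrable std_gaussian f"
proof -
  interpret prob_space "std_gaussian :: 'a measure" by (rule prob_space_std_gaussian)
  show ?thesis by (rule integrable_const_bound[where B=B]) (use assms in auto)
qed

context sf
begin

definition "H' \<theta> v i y = \<beta> * \<pi> \<theta> y i * (v \<bullet> u \<theta> i - (\<Sum>j\<in>I. \<pi> \<theta> y j * (v \<bullet> u \<theta> j)))"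

lemma H'_measurable[measurable]: "H' \<theta> v i \<in> borel_measurable borel"
  unfolding H'_def \<pi>_def Z_def by measurable

lemma deriv_\<pi>:
  "((\<lambda>s. \<pi> \<theta> (x + s *\<^sub>R v) i) has_real_derivative H' \<theta> v i (x + t *\<^sub>R v)) (at t)"
proof -
  define e where "e j s = exp (\<beta> * (x \<bullet> u \<theta> j + s * (v \<bullet> u \<theta> j)))" for j s
  have de: "((\<lambda>s. e j s) has_real_derivative e j t * (\<beta> * (v \<bullet> u \<theta> j))) (at t)" for j
    unfolding e_def by (auto intro!: derivative_eq_intros)
  have eq: "\<pi> \<theta> (x + s *\<^sub>R v) j = e j s / (\<Sum>k\<in>I. e k s)" for s j
    by (simp add: \<pi>_def Z_def e_def inner_add_left algebra_simps)
  have Zp: "(\<Sum>k\<in>I. e k t) \<noteq> 0"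
    using Z_pos[of \<theta> "x + t *\<^sub>R v"] by (simp add: Z_def e_def inner_add_left algebra_simps)
  have "((\<lambda>s. e i s / (\<Sum>k\<in>I. e k s)) has_real_derivative
     (e i t * (\<beta> * (v \<bullet> u \<theta> i)) * (\<Sum>k\<in>I. e k t) - e i t * (\<Sum>k\<in>I. e k t * (\<beta> * (v \<bullet> u \<theta> k))))
       / ((\<Sum>k\<in>I. e k t) * (\<Sum>k\<in>I. e k t))) (at t)"
    by (rule DERIV_divide[OF de DERIV_sum[OF de] Zp])
  also have "(e i t * (\<beta> * (v \<bullet> u \<theta> i)) * (\<Sum>k\<in>I. e k t) - e i t * (\<Sum>k\<in>I. e k t * (\<beta> * (v \<bullet> u \<theta> k))))
       / ((\<Sum>k\<in>I. e k t) * (\<Sum>k\<in>I. e k t)) = H' \<theta> v i (x + t *\<^sub>R v)"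
    unfolding H'_def eq using Zp
    by (simp add: field_simps sum_distrib_left sum_distrib_right sum_divide_distrib[symmetric] sum_subtractf)
  finally show ?thesis by (simp add: eq)
qed


lemma H'_bound:
  assumes i: "i \<in> I"
  shows "\<bar>H' \<theta> v i y\<bar> \<le> 1 + \<beta> * (\<bar>v \<bullet> u \<theta> i\<bar> + (\<Sum>j\<in>I. \<bar>v \<bullet> u \<theta> j\<bar>))"
proof -
  have s: "\<bar>\<Sum>j\<in>I. \<pi> \<theta> y j * (v \<bullet> u \<theta> j)\<bar> \<le> (\<Sum>j\<in>I. \<bar>v \<bullet> u \<theta> j\<bar>)"
  proof (rule order_trans[OF sum_abs], rule sum_mono)
    fix j assume j: "j \<in> I"
    show "\<bar>\<pi> \<theta> y j * (v \<bullet> u \<theta> j)\<bar> \<le> \<bar>v \<bullet> u \<theta> j\<bar>"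
      using \<pi>_le1[OF j, of \<theta> y] \<pi>_nonneg[of \<theta> y j] by (simp add: abs_mult mult_left_le_one_le)
  qed
  have "\<bar>H' \<theta> v i y\<bar> = \<beta> * \<pi> \<theta> y i * \<bar>v \<bullet> u \<theta> i - (\<Sum>j\<in>I. \<pi> \<theta> y j * (v \<bullet> u \<theta> j))\<bar>"
    using \<beta> \<pi>_nonneg[of \<theta> y i] by (simp add: H'_def abs_mult)
  also have "\<dots> \<le> \<beta> * 1 * (\<bar>v \<bullet> u \<theta> i\<bar> + (\<Sum>j\<in>I. \<bar>v \<bullet> u \<theta> j\<bar>))"
    using \<beta> \<pi>_nonneg[of \<theta> y i] \<pi>_le1[OF i, of \<theta> y] s
    by (intro mult_mono) (auto intro: order_trans[OF abs_triangle_ineq4])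
  finally show ?thesis by simp
qed

lemma ibp_term:
  assumes i: "i \<in> I"
  shows "(\<integral>x. \<pi> \<theta> x i * (x \<bullet> u' \<theta> i) \<partial>std_gaussian) = (\<integral>x. H' \<theta> (u' \<theta> i) i x \<partial>std_gaussian)"
proof -
  define v where "v = u' \<theta> i"
  define B where "B = 1 + \<beta> * (\<bar>v \<bullet> u \<theta> i\<bar> + (\<Sum>j\<in>I. \<bar>v \<bullet> u \<theta> j\<bar>))"
  have B0: "0 \<le> \<beta> * (\<bar>v \<bullet> u \<theta> i\<bar> + (\<Sum>j\<in>I. \<bar>v \<bullet> u \<theta> j\<bar>))"
    using \<beta> by (intro mult_nonneg_nonneg add_nonneg_nonneg sum_nonneg) auto
  have hb: "\<bar>\<pi> \<theta> x i\<bar> \<le> B" for x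
    using \<pi>_le1[OF i, of \<theta> x] \<pi>_nonneg[of \<theta> x i] B0 by (simp add: B_def)
  have h'b: "\<bar>H' \<theta> v i y\<bar> \<le> B" for y
    unfolding B_def by (rule H'_bound[OF i])
  have "(\<integral>x. H' \<theta> v i x \<partial>std_gaussian) = (\<integral>x. (x \<bullet> v) * \<pi> \<theta> x i \<partial>std_gaussian)"
    by (rule gauss_ibp[OF _ _ hb h'b deriv_\<pi>]) auto
  then show ?thesis by (simp add: v_def mult.commute)
qed

lemma dsum_nonneg:
  assumes orth: "\<And>i j. i \<in> I \<Longrightarrow> j \<in> I \<Longrightarrow> p i \<bullet> q j = 0"
    and dist: "\<And>i j. i \<in> I \<Longrightarrow> j \<in> I \<Longrightarrow> norm (p i - p j) \<le> norm (q i - q j)"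
    and th: "0 \<le> \<theta>" "\<theta> \<le> pi/2"
  shows "0 \<le> (\<Sum>i\<in>I. H' \<theta> (u' \<theta> i) i y)"
proof -
  define D where "D i j = u' \<theta> i \<bullet> u \<theta> j" for i j
  have Dij: "D i j = sin \<theta> * cos \<theta> * (q i \<bullet> q j - p i \<bullet> p j)" if "i \<in> I" "j \<in> I" for i j
    using orth[OF that] orth[of j i] that
    by (simp add: D_def u_def u'_def inner_add_right inner_diff_left inner_commute algebra_simps)
  have sc: "0 \<le> sin \<theta> * cos \<theta>"
    using th by (intro mult_nonneg_nonneg sin_ge_zero cos_ge_zero) auto
  have Dq: "0 \<le> D i i + D j j - 2 * D i j" if "i \<in> I" "j \<in> I" for i j
  proof -
    have "D i i + D j j - 2 * D i j = sin \<theta> * cos \<theta> * ((norm (q i - q j))\<^sup>2 - (norm (p i - p j))\<^sup>2)"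
      using that unfolding Dij[OF that(1,1)] Dij[OF that(2,2)] Dij[OF that]
      by (simp add: power2_norm_eq_inner inner_diff_left inner_diff_right inner_commute algebra_simps)
    also have "\<dots> \<ge> 0"
      using dist[OF that] by (intro mult_nonneg_nonneg[OF sc]) (auto intro: power_mono)
    finally show ?thesis .
  qed
  have "(\<Sum>i\<in>I. H' \<theta> (u' \<theta> i) i y) = \<beta> * ((\<Sum>i\<in>I. \<pi> \<theta> y i * D i i) - (\<Sum>i\<in>I. \<Sum>j\<in>I. \<pi> \<theta> y i * \<pi> \<theta> y j * D i j))"
    by (simp add: H'_def D_def sum_distrib_left right_diff_distrib sum_subtractf algebra_simps)
  also have "\<dots> \<ge> 0"
    using \<beta> by (intro mult_nonneg_nonneg softmax_quad[OF fin] Dq \<pi>_nonneg sum_\<pi>) auto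
  finally show ?thesis .
qed

lemma dphi_nonneg:
  assumes orth: "\<And>i j. i \<in> I \<Longrightarrow> j \<in> I \<Longrightarrow> p i \<bullet> q j = 0"
    and dist: "\<And>i j. i \<in> I \<Longrightarrow> j \<in> I \<Longrightarrow> norm (p i - p j) \<le> norm (q i - q j)"
    and th: "0 \<le> \<theta>" "\<theta> \<le> pi/2"
  shows "0 \<le> (\<integral>x. (\<Sum>i\<in>I. \<pi> \<theta> x i * (x \<bullet> u' \<theta> i)) \<partial>std_gaussian)"
proof -
  have ih: "integrable std_gaussian (H' \<theta> (u' \<theta> i) i)" if "i \<in> I" for i
  proof -
    show ?thesis
      by (rule integrable_bounded_std_gaussian[OF _ H'_bound[OF that]]) simp
  qed
  have "(\<integral>x. (\<Sum>i\<in>I. \<pi> \<theta> x i * (x \<bullet> u' \<theta> i)) \<partial>std_gaussian)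
      = (\<Sum>i\<in>I. \<integral>x. \<pi> \<theta> x i * (x \<bullet> u' \<theta> i) \<partial>std_gaussian)"
    by (rule Bochner_Integration.integral_sum[where f="\<lambda>i x. \<pi> \<theta> x i * (x \<bullet> u' \<theta> i)"]) (rule integrable_dterm)
  also have "\<dots> = (\<Sum>i\<in>I. \<integral>x. H' \<theta> (u' \<theta> i) i x \<partial>std_gaussian)"
    by (intro sum.cong refl ibp_term)
  also have "\<dots> = (\<integral>x. (\<Sum>i\<in>I. H' \<theta> (u' \<theta> i) i x) \<partial>std_gaussian)"
    by (rule Bochner_Integration.integral_sum[symmetric]) (rule ih)
  also have "\<dots> \<ge> 0"
    by (intro integral_nonneg_AE AE_I2 dsum_nonneg orth dist th)
  finally show ?thesis .
qed

end


lemma abs_SUP_le_sum: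
  fixes f :: "'i \<Rightarrow> real"
  assumes "finite I" "I \<noteq> {}"
  shows "\<bar>SUP i\<in>I. f i\<bar> \<le> (\<Sum>i\<in>I. \<bar>f i\<bar>)"
proof -
  obtain i0 where i0: "i0 \<in> I" using assms by auto
  have bdd: "bdd_above (f ` I)" using assms by simp
  have up: "(SUP i\<in>I. f i) \<le> (\<Sum>i\<in>I. \<bar>f i\<bar>)"
  proof (rule cSUP_least[OF assms(2)])
    fix i assume "i \<in> I"
    then show "f i \<le> (\<Sum>i\<in>I. \<bar>f i\<bar>)"
      using member_le_sum[of i I "\<lambda>i. \<bar>f i\<bar>"] assms by fastforce
  qed
  have "f i0 \<le> (SUP i\<in>I. f i)" by (rule cSUP_upper[OF i0 bdd])
  moreover have "- (\<Sum>i\<in>I. \<bar>f i\<bar>) \<le> f i0"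
    using member_le_sum[of i0 I "\<lambda>i. \<bar>f i\<bar>"] assms i0 by fastforce
  ultimately show ?thesis using up by linarith
qed

lemma integrable_SUP_inner:
  fixes p :: "'i \<Rightarrow> 'a::euclidean_space"
  assumes "finite I" "I \<noteq> {}"
  shows "integrable std_gaussian (\<lambda>x. SUP i\<in>I. x \<bullet> p i)"
proof (rule Bochner_Integration.integrable_bound)
  show "integrable std_gaussian (\<lambda>x. (\<Sum>i\<in>I. norm (p i)) * exp (norm x))"
    by (intro integrable_mult_right integrable_exp_norm[of 1, simplified])
  show "AE x in std_gaussian. norm (SUP i\<in>I. x \<bullet> p i) \<le> norm ((\<Sum>i\<in>I. norm (p i)) * exp (norm x))"
  proof (rule AE_I2)
    fix x :: 'a
    have "\<bar>SUP i\<in>I. x \<bullet> p i\<bar> \<le> (\<Sum>i\<in>I. \<bar>x \<bullet> p i\<bar>)" by (rule abs_SUP_le_sum[OF assms])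
    also have "\<dots> \<le> (\<Sum>i\<in>I. norm (p i) * exp (norm x))"
    proof (rule sum_mono)
      fix i
      have "\<bar>x \<bullet> p i\<bar> \<le> norm (p i) * norm x" by (metis Cauchy_Schwarz_ineq2 mult.commute)
      also have "\<dots> \<le> norm (p i) * exp (norm x)" by (intro mult_left_mono norm_le_exp_norm) simp
      finally show "\<bar>x \<bullet> p i\<bar> \<le> norm (p i) * exp (norm x)" .
    qed
    also have "\<dots> = (\<Sum>i\<in>I. norm (p i)) * exp (norm x)" by (simp add: sum_distrib_right)
    finally show "norm (SUP i\<in>I. x \<bullet> p i) \<le> norm ((\<Sum>i\<in>I. norm (p i)) * exp (norm x))"
      by (simp add: sum_nonneg)
  qed
  show "(\<lambda>x. SUP i\<in>I. x \<bullet> p i) \<in> borel_measurable std_gaussian"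
  proof (rule borel_measurable_cSUP)
    show "countable I" using assms by (simp add: countable_finite)
    show "(\<lambda>x. x \<bullet> p i) \<in> borel_measurable std_gaussian" for i by measurable
  qed (use assms in auto)
qed

context sf
begin

lemma phi_mono:
  assumes orth: "\<And>i j. i \<in> I \<Longrightarrow> j \<in> I \<Longrightarrow> p i \<bullet> q j = 0"
    and dist: "\<And>i j. i \<in> I \<Longrightarrow> j \<in> I \<Longrightarrow> norm (p i - p j) \<le> norm (q i - q j)"
  shows "(\<integral>x. \<Phi> 0 x \<partial>std_gaussian) \<le> (\<integral>x. \<Phi> (pi/2) x \<partial>std_gaussian)"
  by (rule DERIV_nonneg_imp_nondecreasing[where f="\<lambda>\<theta>. \<integral>x. \<Phi> \<theta> x \<partial>std_gaussian"])
     (use deriv_\<phi> dphi_nonneg[OF orth dist] in auto)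

lemma SUP_le_\<Phi>0: "(SUP i\<in>I. x \<bullet> p i) \<le> \<Phi> 0 x"
  by (rule cSUP_least[OF ne]) (use \<Phi>_ge[of _ x 0] in \<open>simp add: u_def\<close>)

lemma \<Phi>1_le_SUP: "\<Phi> (pi/2) x \<le> (SUP i\<in>I. x \<bullet> q i) + ln (card I) / \<beta>"
  by (rule \<Phi>_le) (auto simp: u_def fin intro!: cSUP_upper)

lemma SF_beta:
  assumes orth: "\<And>i j. i \<in> I \<Longrightarrow> j \<in> I \<Longrightarrow> p i \<bullet> q j = 0"
    and dist: "\<And>i j. i \<in> I \<Longrightarrow> j \<in> I \<Longrightarrow> norm (p i - p j) \<le> norm (q i - q j)"
  shows "(\<integral>x. (SUP i\<in>I. x \<bullet> p i) \<partial>std_gaussian) \<le> (\<integral>x. (SUP i\<in>I. x \<bullet> q i) \<partial>std_gaussian) + ln (card I) / \<beta>"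
proof -
  have "(\<integral>x. (SUP i\<in>I. x \<bullet> p i) \<partial>std_gaussian) \<le> (\<integral>x. \<Phi> 0 x \<partial>std_gaussian)"
    by (intro integral_mono integrable_SUP_inner fin ne integrable_\<Phi> SUP_le_\<Phi>0)
  also have "\<dots> \<le> (\<integral>x. \<Phi> (pi/2) x \<partial>std_gaussian)" by (rule phi_mono[OF orth dist])
  also have "\<dots> \<le> (\<integral>x. (SUP i\<in>I. x \<bullet> q i) + ln (card I) / \<beta> \<partial>std_gaussian)"
    by (intro integral_mono integrable_SUP_inner fin ne integrable_\<Phi> \<Phi>1_le_SUP
        Bochner_Integration.integrable_add integrable_const_std_gaussian)
  also have "\<dots> = (\<integral>x. (SUP i\<in>I. x \<bullet> q i) \<partial>std_gaussian) + ln (card I) / \<beta>"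
  proof -
    interpret prob_space "std_gaussian :: 'a measure" by (rule prob_space_std_gaussian)
    have "prob UNIV = 1" using prob_space by simp
    then show ?thesis
      by (subst Bochner_Integration.integral_add) (auto intro: integrable_SUP_inner[OF fin ne])
  qed
  finally show ?thesis .
qed

end

theorem sudakov_fernique_orth:
  fixes I :: "'i set" and p q :: "'i \<Rightarrow> 'a::euclidean_space"
  assumes fin: "finite I" and ne: "I \<noteq> {}"
    and orth: "\<And>i j. i \<in> I \<Longrightarrow> j \<in> I \<Longrightarrow> p i \<bullet> q j = 0"
    and dist: "\<And>i j. i \<in> I \<Longrightarrow> j \<in> I \<Longrightarrow> norm (p i - p j) \<le> norm (q i - q j)"
  shows "(\<integral>x. (SUP i\<in>I. x \<bullet> p i) \<partial>std_gaussian) \<le> (\<integral>x. (SUP i\<in>I. x \<bullet> q i) \<partial>std_gaussian)"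
proof (rule field_le_epsilon)
  fix e :: real assume e: "0 < e"
  define L where "L = ln (real (card I))"
  have L0: "0 \<le> L" unfolding L_def using fin ne by (intro ln_ge_zero) (simp add: Suc_le_eq card_gt_0_iff)
  define \<beta> where "\<beta> = (L + 1) / e"
  have \<beta>: "0 < \<beta>" unfolding \<beta>_def using e L0 by simp
  interpret sf I p q \<beta> by unfold_locales (use fin ne \<beta> in auto)
  have "L / \<beta> \<le> e"
    using e L0 by (simp add: \<beta>_def field_simps)
  then show "(\<integral>x. (SUP i\<in>I. x \<bullet> p i) \<partial>std_gaussian) \<le> (\<integral>x. (SUP i\<in>I. x \<bullet> q i) \<partial>std_gaussian) + e"
    using SF_beta[OF orth dist] unfolding L_def by linarith
qed



lemma gdens_Pair: "gdens (x, y) = gdens (x::'a::euclidean_space) * gdens (y::'b::euclidean_space)"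
proof -
  have n: "(norm (x, y))\<^sup>2 = (norm x)\<^sup>2 + (norm y)\<^sup>2" by (simp add: norm_Pair)
  show ?thesis
    unfolding gdens_def n
    by (simp add: DIM_prod powr_add[symmetric] mult_exp_exp[symmetric] add_divide_distrib diff_divide_distrib
        algebra_simps del: mult_exp_exp) (metis diff_conv_add_uminus exp_add)
qed

lemma fst_meas_sg[measurable]: "fst \<in> borel_measurable (std_gaussian :: ('a::euclidean_space \<times> 'b::euclidean_space) measure)"
  unfolding measurable_cong_sets[OF sets_std_gaussian refl]
  by (intro borel_measurable_continuous_onI continuous_intros)

lemma snd_meas_sg[measurable]: "snd \<in> borel_measurable (std_gaussian :: ('a::euclidean_space \<times> 'b::euclidean_space) measure)"
  unfolding measurable_cong_sets[OF sets_std_gaussian refl]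
  by (intro borel_measurable_continuous_onI continuous_intros)

lemma nn_integral_gdens: "(\<integral>\<^sup>+y. ennreal (gdens y) \<partial>(lborel::'a::euclidean_space measure)) = 1"
proof -
  interpret prob_space "std_gaussian :: 'a measure" by (rule prob_space_std_gaussian)
  have "emeasure (std_gaussian :: 'a measure) UNIV = 1" using emeasure_space_1 by simp
  then show ?thesis by (simp add: std_gaussian_gdens emeasure_density)
qed

lemma distr_fst_std_gaussian:
  "distr (std_gaussian :: ('a::euclidean_space \<times> 'b::euclidean_space) measure) borel fst = std_gaussian"
proof (rule measure_eqI)
  fix A :: "'a set" assume A: "A \<in> sets (distr std_gaussian borel fst)"
  then have A[measurable]: "A \<in> sets borel" by simp
  have S[measurable]: "A \<times> (UNIV::'b set) \<in> sets (borel::('a \<times> 'b) measure)"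
    unfolding borel_prod[symmetric] by (intro pair_measureI) auto
  have M: "(\<lambda>z. ennreal (gdens z) * indicator (A \<times> UNIV) z) \<in> borel_measurable ((lborel::'a measure) \<Otimes>\<^sub>M (lborel::'b measure))"
    unfolding lborel_prod by measurable
  have "emeasure (distr (std_gaussian :: ('a \<times> 'b) measure) borel fst) A
      = emeasure (std_gaussian :: ('a \<times> 'b) measure) (A \<times> UNIV)"
    by (subst emeasure_distr) (auto intro!: arg_cong[where f="emeasure _"])
  also have "\<dots> = (\<integral>\<^sup>+z. ennreal (gdens z) * indicator (A \<times> UNIV) z \<partial>(lborel :: ('a \<times> 'b) measure))"
  proof -
    show ?thesis unfolding std_gaussian_gdens by (subst emeasure_density) (use S in auto)
  qed
  also have "\<dots> = (\<integral>\<^sup>+z. ennreal (gdens z) * indicator (A \<times> UNIV) z \<partial>((lborel :: 'a measure) \<Otimes>\<^sub>M (lborel :: 'b measure)))"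
    by (simp only: lborel_prod)
  also have "\<dots> = (\<integral>\<^sup>+(x::'a). \<integral>\<^sup>+(y::'b). ennreal (gdens (x, y)) * indicator (A \<times> UNIV) (x, y) \<partial>lborel \<partial>lborel)"
    by (rule lborel.nn_integral_fst[OF M, symmetric])
  also have "\<dots> = (\<integral>\<^sup>+(x::'a). ennreal (gdens x) * indicator A x * (\<integral>\<^sup>+y. ennreal (gdens y) \<partial>(lborel::'b measure)) \<partial>lborel)"
    by (intro nn_integral_cong)
       (simp add: gdens_Pair ennreal_mult gdens_nonneg nn_integral_cmult[symmetric] indicator_def mult_ac)
  also have "\<dots> = (\<integral>\<^sup>+x. ennreal (gdens x) * indicator A x \<partial>lborel)"
    by (simp add: nn_integral_gdens)
  also have "\<dots> = emeasure std_gaussian A"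
    by (simp add: std_gaussian_gdens emeasure_density)
  finally show "emeasure (distr (std_gaussian :: ('a \<times> 'b) measure) borel fst) A = emeasure std_gaussian A" .
qed simp

lemma distr_snd_std_gaussian:
  "distr (std_gaussian :: ('a::euclidean_space \<times> 'b::euclidean_space) measure) borel snd = std_gaussian"
proof (rule measure_eqI)
  fix A :: "'b set" assume A: "A \<in> sets (distr std_gaussian borel snd)"
  then have A[measurable]: "A \<in> sets borel" by simp
  have S[measurable]: "(UNIV::'a set) \<times> A \<in> sets (borel::('a \<times> 'b) measure)"
    unfolding borel_prod[symmetric] by (intro pair_measureI) auto
  have M: "(\<lambda>z. ennreal (gdens z) * indicator (UNIV \<times> A) z) \<in> borel_measurable ((lborel::'a measure) \<Otimes>\<^sub>M (lborel::'b measure))"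
    unfolding lborel_prod by measurable
  have "emeasure (distr (std_gaussian :: ('a \<times> 'b) measure) borel snd) A
      = emeasure (std_gaussian :: ('a \<times> 'b) measure) (UNIV \<times> A)"
    by (subst emeasure_distr) (auto intro!: arg_cong[where f="emeasure _"])
  also have "\<dots> = (\<integral>\<^sup>+z. ennreal (gdens z) * indicator (UNIV \<times> A) z \<partial>(lborel :: ('a \<times> 'b) measure))"
  proof -
    show ?thesis unfolding std_gaussian_gdens by (subst emeasure_density) (use S in auto)
  qed
  also have "\<dots> = (\<integral>\<^sup>+z. ennreal (gdens z) * indicator (UNIV \<times> A) z \<partial>((lborel :: 'a measure) \<Otimes>\<^sub>M (lborel :: 'b measure)))"
    by (simp only: lborel_prod)
  also have "\<dots> = (\<integral>\<^sup>+(y::'b). \<integral>\<^sup>+(x::'a). ennreal (gdens (x, y)) * indicator (UNIV \<times> A) (x, y) \<partial>lborel \<partial>lborel)"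
    using lborel_pair.nn_integral_snd[OF M] by simp
  also have "\<dots> = (\<integral>\<^sup>+(y::'b). ennreal (gdens y) * indicator A y * (\<integral>\<^sup>+x. ennreal (gdens x) \<partial>(lborel::'a measure)) \<partial>lborel)"
    by (intro nn_integral_cong)
       (simp add: gdens_Pair ennreal_mult gdens_nonneg nn_integral_cmult[symmetric] indicator_def mult_ac)
  also have "\<dots> = (\<integral>\<^sup>+y. ennreal (gdens y) * indicator A y \<partial>lborel)"
    by (simp add: nn_integral_gdens)
  also have "\<dots> = emeasure std_gaussian A"
    by (simp add: std_gaussian_gdens emeasure_density)
  finally show "emeasure (distr (std_gaussian :: ('a \<times> 'b) measure) borel snd) A = emeasure std_gaussian A" .
qed simp



lemma meas_SUP_inner[measurable]:
  fixes a :: "'i \<Rightarrow> 'a::euclidean_space"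
  assumes "finite I"
  shows "(\<lambda>x. SUP i\<in>I. x \<bullet> a i) \<in> borel_measurable borel"
proof (rule borel_measurable_cSUP)
  show "countable I" using assms by (simp add: countable_finite)
qed (use assms in auto)

lemma width_compare:
  fixes a :: "'i \<Rightarrow> 'a::euclidean_space" and b :: "'i \<Rightarrow> 'b::euclidean_space"
  assumes fin: "finite I" and ne: "I \<noteq> {}"
    and d: "\<And>i j. i \<in> I \<Longrightarrow> j \<in> I \<Longrightarrow> norm (a i - a j) \<le> norm (b i - b j)"
  shows "(\<integral>x. (SUP i\<in>I. x \<bullet> a i) \<partial>std_gaussian) \<le> (\<integral>y. (SUP i\<in>I. y \<bullet> b i) \<partial>std_gaussian)"
proof -
  have "(\<integral>x. (SUP i\<in>I. x \<bullet> a i) \<partial>std_gaussian)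
      = (\<integral>x. (SUP i\<in>I. x \<bullet> a i) \<partial>distr (std_gaussian :: ('a \<times> 'b) measure) borel fst)"
    by (simp add: distr_fst_std_gaussian)
  also have "\<dots> = (\<integral>z. (SUP i\<in>I. z \<bullet> (a i, 0::'b)) \<partial>(std_gaussian :: ('a \<times> 'b) measure))"
    by (subst integral_distr) (auto simp: fin inner_Pair_0)
  also have "\<dots> \<le> (\<integral>z. (SUP i\<in>I. z \<bullet> (0::'a, b i)) \<partial>(std_gaussian :: ('a \<times> 'b) measure))"
    by (rule sudakov_fernique_orth[OF fin ne]) (auto simp: d)
  also have "\<dots> = (\<integral>y. (SUP i\<in>I. y \<bullet> b i) \<partial>distr (std_gaussian :: ('a \<times> 'b) measure) borel snd)"
    by (subst integral_distr) (auto simp: fin inner_Pair_0)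
  also have "\<dots> = (\<integral>y. (SUP i\<in>I. y \<bullet> b i) \<partial>std_gaussian)"
    by (simp add: distr_snd_std_gaussian)
  finally show ?thesis .
qed

lemma SUP_scale:
  fixes f :: "'i \<Rightarrow> real"
  assumes "finite I" "I \<noteq> {}" "0 \<le> c"
  shows "(SUP i\<in>I. c * f i) = c * (SUP i\<in>I. f i)"
proof -
  have m: "mono ((*) c)" using assms by (auto intro: monoI mult_left_mono)
  have "(SUP i\<in>I. c * f i) = Sup ((*) c ` f ` I)" by (simp add: image_image)
  also have "\<dots> = Max ((*) c ` f ` I)" using assms by (simp add: cSup_eq_Max)
  also have "\<dots> = c * Max (f ` I)" using assms by (simp add: mono_Max_commute[OF m])
  also have "\<dots> = c * (SUP i\<in>I. f i)" using assms by (simp add: cSup_eq_Max)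
  finally show ?thesis .
qed

lemma width_scale:
  fixes X :: "'a::euclidean_space set"
  assumes "finite X" "X \<noteq> {}" "0 \<le> c"
  shows "(\<integral>g. (SUP x\<in>X. g \<bullet> (c *\<^sub>R x)) \<partial>std_gaussian) = c * gaussian_width X"
  unfolding gaussian_width_def
  by (simp add: SUP_scale[OF assms])

lemma width_zero:
  fixes I :: "'i set"
  assumes "finite I" "I \<noteq> {}"
  shows "(\<integral>g. (SUP i\<in>I. g \<bullet> (0::'a::euclidean_space)) \<partial>std_gaussian) = 0"
  using assms by simp



theorem lemma6:
  fixes X :: "'m::euclidean_space set" and S :: "'d::euclidean_space set"
    and \<psi> :: "'m \<Rightarrow> 'd" and \<epsilon> :: real
  assumes "finite X" and "X \<noteq> {}" and "X \<subseteq> sphere 0 1"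
    and "eps_isometric \<epsilon> \<psi> X" and "S = \<psi> ` X"
  shows "(1 - \<epsilon>) * gaussian_width X \<le> gaussian_width S
       \<and> gaussian_width S \<le> (1 + \<epsilon>) * gaussian_width X"
proof -
  note fin = assms(1) and ne = assms(2)
  have iso: "(1 - \<epsilon>) * norm (x - y) \<le> norm (\<psi> x - \<psi> y)" "norm (\<psi> x - \<psi> y) \<le> (1 + \<epsilon>) * norm (x - y)"
    if "x \<in> X" "y \<in> X" for x y
    using assms(4) that by (auto simp: eps_isometric_def dist_norm)
  have wS: "gaussian_width S = (\<integral>g. (SUP x\<in>X. g \<bullet> \<psi> x) \<partial>std_gaussian)"
    by (simp add: gaussian_width_def assms(5) image_image)
  have wX: "gaussian_width X = (\<integral>g. (SUP x\<in>X. g \<bullet> x) \<partial>std_gaussian)"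
    by (simp add: gaussian_width_def)
  have z1: "(\<integral>g. (SUP x\<in>X. g \<bullet> (0::'m)) \<partial>std_gaussian) = 0" by (rule width_zero[OF fin ne])
  have z2: "(\<integral>g. (SUP x\<in>X. g \<bullet> (0::'d)) \<partial>std_gaussian) = 0" by (rule width_zero[OF fin ne])
  have X0: "0 \<le> gaussian_width X"
  proof -
    have "(\<integral>g. (SUP x\<in>X. g \<bullet> (0::'m)) \<partial>std_gaussian) \<le> (\<integral>g. (SUP x\<in>X. g \<bullet> x) \<partial>std_gaussian)"
      by (rule width_compare[OF fin ne]) simp
    then show ?thesis using z1 wX by linarith
  qed
  have S0: "0 \<le> gaussian_width S"
  proof -
    have "(\<integral>g. (SUP x\<in>X. g \<bullet> (0::'m)) \<partial>std_gaussian) \<le> (\<integral>g. (SUP x\<in>X. g \<bullet> \<psi> x) \<partial>std_gaussian)"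
      by (rule width_compare[OF fin ne]) simp
    then show ?thesis using z1 wS by linarith
  qed
  have nsc: "norm (c *\<^sub>R x - c *\<^sub>R y) = \<bar>c\<bar> * norm (x - y)" for c and x y :: 'm
    by (simp add: scaleR_right_diff_distrib[symmetric])
  have upper: "gaussian_width S \<le> (1 + \<epsilon>) * gaussian_width X"
  proof (cases "0 \<le> 1 + \<epsilon>")
    case True
    have "gaussian_width S \<le> (\<integral>g. (SUP x\<in>X. g \<bullet> ((1 + \<epsilon>) *\<^sub>R x)) \<partial>std_gaussian)"
      unfolding wS by (rule width_compare[OF fin ne]) (use iso True in \<open>simp add: nsc\<close>)
    also have "\<dots> = (1 + \<epsilon>) * gaussian_width X" by (rule width_scale[OF fin ne True])
    finally show ?thesis .
  next
    case False
    have xy: "x = y" if "x \<in> X" "y \<in> X" for x y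
    proof -
      have "(1 - \<epsilon>) * norm (x - y) \<le> (1 + \<epsilon>) * norm (x - y)"
        using iso[OF that] by linarith
      then have a: "0 \<le> \<epsilon> * norm (x - y)" by (simp add: algebra_simps)
      have b: "\<epsilon> * norm (x - y) \<le> 0" using False by (intro mult_nonpos_nonneg) auto
      from a b have "\<epsilon> * norm (x - y) = 0" by linarith
      then have "norm (x - y) \<le> 0" using False by simp
      then show ?thesis by simp
    qed
    have "(\<integral>g. (SUP x\<in>X. g \<bullet> x) \<partial>std_gaussian) \<le> (\<integral>g. (SUP x\<in>X. g \<bullet> (0::'m)) \<partial>std_gaussian)"
      by (rule width_compare[OF fin ne]) (metis xy diff_self order_refl)
    then have "gaussian_width X \<le> 0" using z1 wX by linarith
    moreover have "(\<integral>g. (SUP x\<in>X. g \<bullet> \<psi> x) \<partial>std_gaussian) \<le> (\<integral>g. (SUP x\<in>X. g \<bullet> (0::'d)) \<partial>std_gaussian)"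
      by (rule width_compare[OF fin ne]) (metis xy diff_self order_refl)
    then have "gaussian_width S \<le> 0" using z2 wS by linarith
    ultimately show ?thesis using X0 by simp
  qed
  have lower: "(1 - \<epsilon>) * gaussian_width X \<le> gaussian_width S"
  proof (cases "0 \<le> 1 - \<epsilon>")
    case True
    have "(1 - \<epsilon>) * gaussian_width X = (\<integral>g. (SUP x\<in>X. g \<bullet> ((1 - \<epsilon>) *\<^sub>R x)) \<partial>std_gaussian)"
      by (rule width_scale[OF fin ne True, symmetric])
    also have "\<dots> \<le> gaussian_width S"
      unfolding wS by (rule width_compare[OF fin ne]) (use iso True in \<open>simp add: nsc\<close>)
    finally show ?thesis .
  next
    case False
    then have "(1 - \<epsilon>) * gaussian_width X \<le> 0" using X0 by (simp add: mult_nonpos_nonneg)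
    then show ?thesis using S0 by linarith
  qed
  show ?thesis using upper lower by simp
qed


end
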